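(* If $c$ is real with $0\le c\le 1/4$, then $r_{\mathrm{bif}}(c)=1/4-c$.
   Context: $f_c(z)=z^2+c$, extended to $\widehat{\mathbb{C}}$ by $f_c(\infty)=\infty$. For $c\in\mathbb{C}$, $r\ge0$, $G_{c,r}$ is the semigroup under composition generated by $\{f_{c'}:|c'-c|\le r\}$. A minimal set of a polynomial semigroup $G$ is a minimal element, with respect to inclusion, of the family of non-empty compact $L\subset\widehat{\mathbb{C}}$ with $g(L)\subset L$ for all $g\in G$; it is planar if $\infty\notin L$. The bifurcation radius $r_{\mathrm{bif}}(c)$ is the supremum of those $r\ge0$ for which $G_{c,r}$ has a planar minimal set (equivalently the infimum of those $r\ge0$ for which $G_{c,r}$ has no planar minimal set); by prior work this value is attained and $G_{c,r}$ has a planar minimal set iff $r\le r_{\mathrm{bif}}(c)$. *)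

theory Defs
  imports "HOL-Analysis.Analysis"
begin

definition fc :: "complex \<Rightarrow> complex \<Rightarrow> complex" where
  "fc c z = z^2 + c"

text \<open>G_{c,r}: the semigroup under composition generated by f_{c'} with |c' - c| \<le> r,
  as maps restricted to the plane (each f_{c'} maps the plane to itself).\<close>
inductive_set Gsemi :: "complex \<Rightarrow> real \<Rightarrow> (complex \<Rightarrow> complex) set"
  for c :: complex and r :: real where
  gen: "cmod (c' - c) \<le> r \<Longrightarrow> fc c' \<in> Gsemi c r"
| comp: "g \<in> Gsemi c r \<Longrightarrow> h \<in> Gsemi c r \<Longrightarrow> g \<circ> h \<in> Gsemi c r"

definition forward_invariant :: "(complex \<Rightarrow> complex) set \<Rightarrow> complex set \<Rightarrow> bool" where
  "forward_invariant G L \<longleftrightarrow> (\<forall>g\<in>G. g ` L \<subseteq> L)"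

text \<open>A planar minimal set: a minimal set not containing infinity. Every subset of a
  planar set is planar, and a subset of the plane is compact in the Riemann sphere iff
  it is compact in the plane, so minimality can be tested among planar compact sets.\<close>
definition planar_minimal_set :: "(complex \<Rightarrow> complex) set \<Rightarrow> complex set \<Rightarrow> bool" where
  "planar_minimal_set G L \<longleftrightarrow>
     L \<noteq> {} \<and> compact L \<and> forward_invariant G L \<and>
     (\<forall>K. K \<noteq> {} \<and> compact K \<and> forward_invariant G K \<and> K \<subseteq> L \<longrightarrow> K = L)"

definition r_bif :: "complex \<Rightarrow> real" where
  "r_bif c = Sup {r. r \<ge> 0 \<and> (\<exists>L. planar_minimal_set (Gsemi c r) L)}"

end

theory Submission
  imports Defs
begin

lemma gen_inv:
  assumes "forward_invariant (Gsemi c0 r) L" "cmod (c' - c0) \<le> r" "z \<in> L"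
  shows "z^2 + c' \<in> L"
proof -
  have "fc c' \<in> Gsemi c0 r" using assms(2) by (rule Gsemi.gen)
  then have "fc c' ` L \<subseteq> L" using assms(1) by (auto simp: forward_invariant_def)
  then show ?thesis using assms(3) by (auto simp: fc_def)
qed

lemma minimal_exists:
  assumes "L0 \<noteq> {}" "compact L0" "forward_invariant G L0"
  shows "\<exists>L. planar_minimal_set G L"
proof -
  define A where "A = {K. K \<noteq> {} \<and> compact K \<and> forward_invariant G K \<and> K \<subseteq> L0}"
  define A' where "A' = uminus ` A"
  have L0A: "L0 \<in> A" using assms by (auto simp: A_def)
  have "\<forall>C\<in>chains A'. \<exists>U\<in>A'. \<forall>X\<in>C. X \<subseteq> U"
  proof
    fix C assume C: "C \<in> chains A'"
    show "\<exists>U\<in>A'. \<forall>X\<in>C. X \<subseteq> U"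
    proof (cases "C = {}")
      case True then show ?thesis using L0A by (auto simp: A'_def)
    next
      case False
      define F where "F = uminus ` C"
      have FA: "F \<subseteq> A" using chainsD2[OF C] by (auto simp: F_def A'_def)
      have chF: "S \<subseteq> T \<or> T \<subseteq> S" if "S \<in> F \<and> T \<in> F" for S T
        using chainsD[OF C] that by (auto simp: F_def)
      have Fne: "F \<noteq> {}" using False by (auto simp: F_def)
      have "\<Inter>F \<noteq> {}"
        by (rule compact_chain) (use FA chF in \<open>auto simp: A_def\<close>)
      moreover have "compact (\<Inter>F)"
        by (rule compact_Inter) (use FA Fne in \<open>auto simp: A_def\<close>)
      moreover have "forward_invariant G (\<Inter>F)"
        using FA unfolding forward_invariant_def A_def by blast
      moreover have "\<Inter>F \<subseteq> L0" using FA Fne unfolding A_def by blast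
      ultimately have IA: "\<Inter>F \<in> A" by (auto simp: A_def)
      show ?thesis
      proof (rule bexI[of _ "- \<Inter>F"])
        show "- \<Inter>F \<in> A'" using IA by (auto simp: A'_def)
        show "\<forall>X\<in>C. X \<subseteq> - \<Inter> F" unfolding F_def by auto
      qed
    qed
  qed
  from Zorn_Lemma2[OF this] obtain M' where M': "M' \<in> A'" "\<forall>X\<in>A'. M' \<subseteq> X \<longrightarrow> X = M'"
    by blast
  define M where "M = - M'"
  have MA: "M \<in> A" using M'(1) by (auto simp: M_def A'_def)
  have "planar_minimal_set G M"
    unfolding planar_minimal_set_def
  proof (intro conjI allI impI)
    show "M \<noteq> {}" "compact M" "forward_invariant G M" using MA by (auto simp: A_def)
    fix K assume K: "K \<noteq> {} \<and> compact K \<and> forward_invariant G K \<and> K \<subseteq> M"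
    then have "K \<in> A" using MA by (auto simp: A_def)
    then have "-K \<in> A'" by (auto simp: A'_def)
    moreover have "M' \<subseteq> -K" using K by (auto simp: M_def)
    ultimately have "-K = M'" using M'(2) by blast
    then show "K = M" by (auto simp: M_def)
  qed
  then show ?thesis by blast
qed

lemma real_escape:
  fixes L :: "complex set" and a x :: real
  assumes inv: "\<And>z. z \<in> L \<Longrightarrow> z^2 + complex_of_real a \<in> L"
    and bnd: "bounded L" and a: "a > 1/4" and x: "complex_of_real x \<in> L"
  shows False
proof -
  define y where "y n = ((\<lambda>t. t^2 + a) ^^ n) x" for n
  have ys: "y (Suc n) = (y n)^2 + a" for n by (simp add: y_def)
  have y0: "y 0 = x" by (simp add: y_def)
  have inL: "complex_of_real (y n) \<in> L" for n
  proof (induction n)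
    case 0 then show ?case using x y0 by simp
  next
    case (Suc n)
    have "complex_of_real (y (Suc n)) = (complex_of_real (y n))^2 + complex_of_real a"
      by (simp add: ys)
    then show ?case using inv[OF Suc] by simp
  qed
  have grow: "y n \<ge> x + real n * (a - 1/4)" for n
  proof (induction n)
    case 0 then show ?case using y0 by simp
  next
    case (Suc n)
    have "(y n - 1/2)^2 \<ge> 0" by simp
    then have "y (Suc n) \<ge> y n + (a - 1/4)" unfolding ys by (simp add: power2_eq_square algebra_simps)
    moreover have "x + real (Suc n) * (a - 1/4) = x + real n * (a - 1/4) + (a - 1/4)"
      by (simp add: algebra_simps)
    ultimately show ?case using Suc by linarith
  qed
  from bnd obtain B where B: "\<forall>z\<in>L. norm z \<le> B" by (auto simp: bounded_iff)
  have yB: "y n \<le> B" for n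
  proof -
    have "norm (complex_of_real (y n)) \<le> B" using B inL by blast
    then show ?thesis by simp
  qed
  obtain n where n: "real n > (B - x) / (a - 1/4)" using reals_Archimedean2 by blast
  then have "real n * (a - 1/4) > B - x" using a by (simp add: pos_divide_less_eq)
  then show False using grow[of n] yB[of n] by linarith
qed

lemma square_root_near:
  fixes p d :: complex and \<rho> :: real
  assumes "\<rho> \<ge> 0" "2 * cmod p - \<rho> \<ge> 1" "cmod d \<le> \<rho>"
  shows "\<exists>h. cmod h \<le> \<rho> \<and> (p + h)^2 = p^2 + d"
proof -
  define w where "w = csqrt (p^2 + d)"
  have w2: "w^2 = p^2 + d" by (simp add: w_def)
  define h1 where "h1 = w - p"
  define h2 where "h2 = - w - p"
  have e1: "(p + h1)^2 = p^2 + d" using w2 by (simp add: h1_def)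
  have e2: "(p + h2)^2 = p^2 + d" using w2 by (simp add: h2_def power2_eq_square)
  show ?thesis
  proof (rule ccontr)
    assume "\<not> ?thesis"
    then have g1: "cmod h1 > \<rho>" and g2: "cmod h2 > \<rho>" using e1 e2 by (meson not_le)+
    have sum: "h1 + h2 = - 2 * p" by (simp add: h1_def h2_def)
    have prod: "h1 * h2 = - d" using w2 by (simp add: h1_def h2_def power2_eq_square algebra_simps)
    have "cmod h1 + cmod h2 \<ge> 2 * cmod p"
    proof -
      have "cmod (h1 + h2) \<le> cmod h1 + cmod h2" by (rule norm_triangle_ineq)
      moreover have "cmod (h1 + h2) = 2 * cmod p" using sum by (simp add: norm_mult)
      ultimately show ?thesis by simp
    qed
    moreover have "(cmod h1 - \<rho>) * (cmod h2 - \<rho>) > 0" using g1 g2 by simp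
    ultimately have "cmod h1 * cmod h2 > \<rho> * (2 * cmod p - \<rho>)"
    proof -
      assume A1: "cmod h1 + cmod h2 \<ge> 2 * cmod p" and A2: "(cmod h1 - \<rho>) * (cmod h2 - \<rho>) > 0"
      have "cmod h1 * cmod h2 > \<rho> * (cmod h1 + cmod h2) - \<rho> * \<rho>"
        using A2 by (simp add: algebra_simps)
      moreover have "\<rho> * (cmod h1 + cmod h2) \<ge> \<rho> * (2 * cmod p)"
        using A1 assms(1) by (rule mult_left_mono)
      ultimately show ?thesis by (simp add: algebra_simps)
    qed
    moreover have "\<rho> * (2 * cmod p - \<rho>) \<ge> \<rho>" using assms(1,2)
      by (metis mult.right_neutral mult_left_mono)
    moreover have "cmod h1 * cmod h2 = cmod d" using prod by (metis norm_minus_cancel norm_mult)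
    ultimately show False using assms(3) by linarith
  qed
qed

lemma grow:
  fixes L :: "complex set" and c0 p :: complex
  assumes inv: "\<And>z c'. z \<in> L \<Longrightarrow> cmod (c' - c0) \<le> r \<Longrightarrow> z^2 + c' \<in> L"
   and big: "\<And>z. z \<in> L \<Longrightarrow> cmod z > 1/2"
   and ball: "cball p \<rho> \<subseteq> L" and \<rho>: "\<rho> \<ge> 0" and r: "r > 0"
  shows "cball (p^2 + c0) (\<rho> + r) \<subseteq> L"
proof
  have pr: "cmod p > \<rho>"
  proof (rule ccontr)
    assume "\<not> cmod p > \<rho>"
    then have "0 \<in> cball p \<rho>" by (simp add: dist_norm)
    then have "(0::complex) \<in> L" using ball by blast
    then show False using big by fastforce
  qed
  then have p0: "p \<noteq> 0" using \<rho> by auto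
  define q where "q = p * complex_of_real (1 - \<rho> / cmod p)"
  have "cmod q = cmod p * \<bar>1 - \<rho> / cmod p\<bar>" unfolding q_def norm_mult norm_of_real ..
  also have "\<bar>1 - \<rho> / cmod p\<bar> = 1 - \<rho> / cmod p" using pr \<rho> by (simp add: abs_if divide_le_eq_1 not_less)
  finally have cq: "cmod q = cmod p - \<rho>" using p0 by (simp add: algebra_simps)
  have pq: "p - q = p * complex_of_real (\<rho> / cmod p)" by (simp add: q_def algebra_simps)
  have "cmod (p * complex_of_real (\<rho> / cmod p)) = cmod p * \<bar>\<rho> / cmod p\<bar>"
    unfolding norm_mult norm_of_real ..
  also have "\<dots> = \<rho>" using p0 \<rho> by simp
  finally have "cmod (p - q) = \<rho>" unfolding pq .
  then have "q \<in> cball p \<rho>" by (simp add: dist_norm)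
  then have "cmod q > 1/2" using ball big by blast
  then have pbig: "2 * cmod p - \<rho> \<ge> 1" using cq \<rho> by linarith
  fix s assume s: "s \<in> cball (p^2 + c0) (\<rho> + r)"
  define e where "e = s - p^2 - c0"
  have ce: "cmod e \<le> \<rho> + r" using s by (simp add: e_def dist_norm norm_minus_commute algebra_simps)
  define d where "d = e * complex_of_real (\<rho> / (\<rho> + r))"
  define t where "t = e * complex_of_real (r / (\<rho> + r))"
  have pos: "\<rho> + r > 0" using \<rho> r by linarith
  have one: "\<rho> / (\<rho> + r) + r / (\<rho> + r) = 1" using pos by (simp add: add_divide_distrib[symmetric])
  have "d + t = e * complex_of_real (\<rho> / (\<rho> + r) + r / (\<rho> + r))"
    by (simp only: d_def t_def of_real_add distrib_left)
  then have dt: "d + t = e" using one by simp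
  have "cmod d = cmod e * \<bar>\<rho> / (\<rho> + r)\<bar>" unfolding d_def norm_mult norm_of_real ..
  then have "cmod d = cmod e * (\<rho> / (\<rho> + r))" using \<rho> pos by simp
  also have "\<dots> \<le> (\<rho> + r) * (\<rho> / (\<rho> + r))" using ce \<rho> pos by (intro mult_right_mono) auto
  also have "\<dots> = \<rho>" using pos by simp
  finally have cd: "cmod d \<le> \<rho>" .
  have "cmod t = cmod e * \<bar>r / (\<rho> + r)\<bar>" unfolding t_def norm_mult norm_of_real ..
  then have "cmod t = cmod e * (r / (\<rho> + r))" using r pos by simp
  also have "\<dots> \<le> (\<rho> + r) * (r / (\<rho> + r))" using ce r pos by (intro mult_right_mono) auto
  also have "\<dots> = r" using pos by simp
  finally have ct: "cmod t \<le> r" .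
  obtain h where h: "cmod h \<le> \<rho>" "(p + h)^2 = p^2 + d"
    using square_root_near[OF \<rho> pbig cd] by blast
  have "p + h \<in> cball p \<rho>" using h(1) by (simp add: dist_norm)
  then have phL: "p + h \<in> L" using ball by blast
  have "s = (p + h)^2 + (c0 + t)" using h(2) dt by (simp add: e_def algebra_simps)
  moreover have "cmod ((c0 + t) - c0) \<le> r" using ct by simp
  ultimately show "s \<in> L" using inv[OF phL] by simp
qed

lemma no_small:
  fixes c r :: real and L :: "complex set" and z0 :: complex
  assumes inv: "\<And>z c'. z \<in> L \<Longrightarrow> cmod (c' - complex_of_real c) \<le> r \<Longrightarrow> z^2 + c' \<in> L"
   and comp: "compact L" and noreal: "\<And>x. complex_of_real x \<notin> L"
   and cr: "r > 1/4 - c" and c14: "c \<le> 1/4" and z0: "z0 \<in> L"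
  shows "cmod z0 > 1/2"
proof (rule ccontr)
  assume "\<not> cmod z0 > 1/2"
  hence z0s: "cmod z0 \<le> 1/2" by simp
  define D where "D w = (1/2 - Re w)^2 + (Im w)^2" for w
  define \<phi> where "\<phi> w = (1/2 - Re w) / D w" for w
  have Dpos: "D w > 0" if "w \<in> L" for w
  proof (rule ccontr)
    assume "\<not> D w > 0"
    moreover have "D w \<ge> 0" by (simp add: D_def)
    ultimately have "D w = 0" by simp
    then have "Re w = 1/2" "Im w = 0" by (auto simp: D_def sum_power2_eq_zero_iff)
    then have "w = complex_of_real (1/2)" by (simp add: complex_eq_iff)
    with that noreal show False by blast
  qed
  have Dcont: "continuous_on L D" unfolding D_def by (intro continuous_intros)
  have cont: "continuous_on L \<phi>" unfolding \<phi>_def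
    by (intro continuous_intros Dcont) (use Dpos in force)
  obtain zs where zs: "zs \<in> L" "\<And>w. w \<in> L \<Longrightarrow> \<phi> w \<le> \<phi> zs"
    using continuous_attains_sup[OF comp _ cont] z0 by blast
  define k where "k = \<phi> zs"
  have "\<phi> z0 \<ge> 1"
  proof -
    have "(cmod z0)^2 \<le> (1/2)^2" using z0s by (intro power_mono) auto
    then have n: "(Re z0)^2 + (Im z0)^2 \<le> 1/4" by (simp add: cmod_power2 power_divide)
    have "D z0 \<le> 1/2 - Re z0" using n by (simp add: D_def power2_eq_square algebra_simps)
    with Dpos[OF z0] show ?thesis by (simp add: \<phi>_def)
  qed
  hence k1: "k \<ge> 1" using zs k_def z0 by fastforce
  define \<rho> where "\<rho> = 1/(2*k)"
  have \<rho>pos: "\<rho> > 0" and \<rho>le: "\<rho> \<le> 1/2" using k1 by (auto simp: \<rho>_def field_simps)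
  have k\<rho>: "k = 1 / (2 * \<rho>)" using k1 by (simp add: \<rho>_def)
  define m where "m = 1/2 - \<rho>"
  have circ: "(Re zs - m)^2 + (Im zs)^2 = \<rho>^2"
  proof -
    have "1/2 - Re zs = k * D zs" using k_def \<phi>_def Dpos[OF zs(1)] by (simp add: field_simps)
    then have "D zs = 2 * \<rho> * (1/2 - Re zs)" using k1 by (simp add: \<rho>_def field_simps)
    then show ?thesis unfolding m_def D_def by (simp add: power2_eq_square algebra_simps)
  qed
  define v where "v = zs - complex_of_real m"
  have Rev: "Re v = Re zs - m" and Imv: "Im v = Im zs" by (simp_all add: v_def)
  have cv2: "(cmod v)^2 = \<rho>^2" using circ by (simp add: cmod_power2 Rev Imv)
  have vnorm: "cmod v = \<rho>" using cv2 \<rho>pos by (simp add: power2_eq_iff_nonneg)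
  have vn: "v * cnj v = complex_of_real (\<rho>^2)"
    using complex_norm_square[of v] cv2 by simp
  define p where "p = zs^2 + complex_of_real c"
  have key: "p - complex_of_real m = v * complex_of_real (2 * Re v + 2 * m) - complex_of_real (1/4 - c)"
  proof -
    have zsv: "zs = v + complex_of_real m" by (simp add: v_def)
    have ac: "v + cnj v = complex_of_real (2 * Re v)" by (simp add: complex_add_cnj)
    have "v * v + complex_of_real (\<rho>^2) = v * (v + cnj v)" using vn by (simp add: algebra_simps)
    then have vv: "v * v = v * complex_of_real (2 * Re v) - complex_of_real (\<rho>^2)" using ac by (simp add: eq_diff_eq)
    have mm: "m * m - m + c = \<rho>^2 - (1/4 - c)" by (simp add: m_def power2_eq_square algebra_simps)
    have "p - complex_of_real m = v * v + 2 * complex_of_real m * v + complex_of_real (m * m - m + c)"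
      by (simp add: p_def zsv power2_eq_square algebra_simps)
    also have "\<dots> = v * complex_of_real (2 * Re v + 2 * m) - complex_of_real (1/4 - c)"
      unfolding vv mm by (simp add: algebra_simps)
    finally show ?thesis .
  qed
  have bound: "cmod (p - complex_of_real m) \<le> \<rho> + (1/4 - c)"
  proof -
    have "\<bar>Re v\<bar> \<le> \<rho>" using abs_Re_le_cmod[of v] vnorm by simp
    then have a1: "\<bar>2 * Re v + 2 * m\<bar> \<le> 1" using \<rho>le by (simp add: m_def abs_le_iff)
    have "cmod (p - complex_of_real m) \<le> cmod (v * complex_of_real (2 * Re v + 2 * m)) + cmod (complex_of_real (1/4 - c))"
      unfolding key by (rule norm_triangle_ineq4)
    also have "\<dots> = \<rho> * \<bar>2 * Re v + 2 * m\<bar> + \<bar>1/4 - c\<bar>" unfolding norm_mult norm_of_real vnorm ..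
    also have "\<dots> \<le> \<rho> * 1 + (1/4 - c)" using a1 \<rho>pos c14 by (intro add_mono mult_left_mono) auto
    finally show ?thesis by simp
  qed
  define dd where "dd = cmod (p - complex_of_real m)"
  have ddlt: "dd < \<rho> + r" using bound cr by (simp add: dd_def)
  have pos: "\<rho> + r > 0" using ddlt by (simp add: dd_def) (smt (verit) norm_ge_zero)
  define c' where "c' = complex_of_real c + (complex_of_real m - p) * complex_of_real (r / (\<rho> + r))"
  have rpos: "r > 0" using cr c14 by linarith
  have "cmod (c' - complex_of_real c) = dd * \<bar>r / (\<rho> + r)\<bar>"
    unfolding c'_def dd_def by (simp add: norm_mult norm_minus_commute del: of_real_divide)
  also have "\<dots> = dd * (r / (\<rho> + r))" using rpos pos by simp
  also have "\<dots> \<le> (\<rho> + r) * (r / (\<rho> + r))" using ddlt rpos pos by (intro mult_right_mono) auto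
  also have "\<dots> = r" using pos by simp
  finally have c'ok: "cmod (c' - complex_of_real c) \<le> r" .
  define w where "w = zs^2 + c'"
  have wL: "w \<in> L" unfolding w_def using inv[OF zs(1) c'ok] .
  have one: "1 - r / (\<rho> + r) = \<rho> / (\<rho> + r)" using pos by (simp add: field_simps)
  have "w - complex_of_real m = (p - complex_of_real m) * complex_of_real (1 - r / (\<rho> + r))"
    by (simp add: w_def c'_def p_def algebra_simps del: of_real_divide)
  then have "w - complex_of_real m = (p - complex_of_real m) * complex_of_real (\<rho> / (\<rho> + r))"
    unfolding one .
  then have "cmod (w - complex_of_real m) = dd * \<bar>\<rho> / (\<rho> + r)\<bar>"
    unfolding dd_def by (simp only: norm_mult norm_of_real)
  also have "\<dots> = dd * (\<rho> / (\<rho> + r))" using \<rho>pos pos by simp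
  also have "\<dots> < (\<rho> + r) * (\<rho> / (\<rho> + r))" using ddlt \<rho>pos pos by (intro mult_strict_right_mono) auto
  also have "\<dots> = \<rho>" using pos by simp
  finally have wm: "cmod (w - complex_of_real m) < \<rho>" .
  have "\<phi> w > k"
  proof -
    have "(cmod (w - complex_of_real m))^2 < \<rho>^2" using wm by (intro power_strict_mono) auto
    then have "(Re w - m)^2 + (Im w)^2 < \<rho>^2" by (simp add: cmod_power2)
    then have lt: "D w < 2 * \<rho> * (1/2 - Re w)" unfolding D_def m_def
      by (simp add: power2_eq_square algebra_simps)
    have Dw: "D w > 0" using Dpos[OF wL] .
    have "1 / (2 * \<rho>) < (1/2 - Re w) / D w" using lt Dw \<rho>pos by (simp add: field_simps)
    then show ?thesis by (simp add: k\<rho> \<phi>_def)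
  qed
  with zs(2)[OF wL] show False by (simp add: k_def)
qed

lemma cball_invariant:
  fixes c r :: real
  assumes "0 \<le> c" "c + r \<le> 1/4"
  shows "forward_invariant (Gsemi (complex_of_real c) r) (cball 0 (1/2))"
  unfolding forward_invariant_def
proof
  fix g assume "g \<in> Gsemi (complex_of_real c) r"
  then show "g ` cball 0 (1/2) \<subseteq> cball 0 (1/2)"
  proof (induction rule: Gsemi.induct)
    case (gen c')
    show ?case
    proof
      fix y assume "y \<in> fc c' ` cball 0 (1/2)"
      then obtain z where z: "cmod z \<le> 1/2" "y = z^2 + c'" by (auto simp: fc_def)
      have "cmod c' \<le> cmod (complex_of_real c) + cmod (c' - complex_of_real c)"
        by (metis add.commute diff_add_cancel norm_triangle_ineq)
      also have "\<dots> \<le> c + r" using gen assms(1) by simp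
      finally have c': "cmod c' \<le> c + r" .
      have "cmod (z^2) = (cmod z)^2" by (simp add: norm_power)
      also have "\<dots> \<le> (1/2)^2" using z(1) by (intro power_mono) auto
      finally have "cmod (z^2) \<le> 1/4" by (simp add: power_divide)
      moreover have "cmod y \<le> cmod (z^2) + cmod c'" using z(2) norm_triangle_ineq[of "z^2" c'] by simp
      ultimately have "cmod y \<le> 1/4 + (c + r)" using c' by linarith
      then show "y \<in> cball 0 (1/2)" using assms(2) by simp
    qed
  next
    case (comp g h)
    then show ?case by (simp add: image_comp[symmetric]) blast
  qed
qed

lemma nonexist:
  fixes c r :: real and L :: "complex set"
  assumes c14: "c \<le> 1/4" and cr: "r > 1/4 - c" and ne: "L \<noteq> {}" and comp: "compact L"
    and fi: "forward_invariant (Gsemi (complex_of_real c) r) L"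
  shows False
proof -
  have inv: "\<And>z c'. z \<in> L \<Longrightarrow> cmod (c' - complex_of_real c) \<le> r \<Longrightarrow> z^2 + c' \<in> L"
    using gen_inv[OF fi] by blast
  have rpos: "r > 0" using c14 cr by linarith
  have bnd: "bounded L" using comp by (rule compact_imp_bounded)
  have noreal: "complex_of_real x \<notin> L" for x
  proof
    assume x: "complex_of_real x \<in> L"
    have "\<And>z. z \<in> L \<Longrightarrow> z^2 + complex_of_real (c + r) \<in> L"
      by (rule inv) (use rpos in \<open>simp_all\<close>)
    from real_escape[OF this bnd _ x] show False using cr by linarith
  qed
  have big: "\<And>z. z \<in> L \<Longrightarrow> cmod z > 1/2"
    using no_small[OF inv comp noreal cr c14] by blast
  have balls: "\<exists>p. cball p (real n * r) \<subseteq> L" for n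
  proof (induction n)
    case 0
    from ne obtain p where "p \<in> L" by blast
    then show ?case by (intro exI[of _ p]) simp
  next
    case (Suc n)
    then obtain p where p: "cball p (real n * r) \<subseteq> L" by blast
    have "cball (p^2 + complex_of_real c) (real n * r + r) \<subseteq> L"
      by (rule grow[OF inv big p]) (use rpos in auto)
    then show ?case by (intro exI[of _ "p^2 + complex_of_real c"]) (simp add: algebra_simps)
  qed
  from bnd obtain B where B: "\<forall>z\<in>L. norm z \<le> B" by (auto simp: bounded_iff)
  obtain n where n: "real n > 2 * B / r" using reals_Archimedean2 by blast
  then have nr: "real n * r > 2 * B" using rpos by (simp add: pos_divide_less_eq)
  define R where "R = real n * r"
  obtain p where p: "cball p R \<subseteq> L" using balls R_def by blast
  have R0: "R \<ge> 0" using rpos by (simp add: R_def)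
  have "p \<in> L" using p R0 by auto
  then have pB: "cmod p \<le> B" using B by blast
  have "p + complex_of_real R \<in> cball p R" using R0 by (simp add: dist_norm)
  then have "cmod (p + complex_of_real R) \<le> B" using p B by blast
  moreover have "cmod (complex_of_real R) \<le> cmod (p + complex_of_real R) + cmod p"
    using norm_triangle_ineq4[of "p + complex_of_real R" p] by simp
  ultimately have "R \<le> 2 * B" using pB R0 by simp
  then have "real n * r \<le> 2 * B" by (simp add: R_def)
  with nr show False by linarith
qed

theorem theorem4p12:
  fixes c :: real
  assumes "0 \<le> c" and "c \<le> 1/4"
  shows "r_bif (complex_of_real c) = 1/4 - c"
proof -
  define S where "S = {r. r \<ge> 0 \<and> (\<exists>L. planar_minimal_set (Gsemi (complex_of_real c) r) L)}"
  have inS: "1/4 - c \<in> S"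
  proof -
    have "\<exists>L. planar_minimal_set (Gsemi (complex_of_real c) (1/4 - c)) L"
      by (rule minimal_exists[of "cball 0 (1/2)"]) (use cball_invariant[of c "1/4 - c"] assms in auto)
    then show ?thesis using assms by (simp add: S_def)
  qed
  have ub: "r \<le> 1/4 - c" if "r \<in> S" for r
  proof (rule ccontr)
    assume "\<not> r \<le> 1/4 - c"
    then have cr: "r > 1/4 - c" by simp
    from that obtain L where "planar_minimal_set (Gsemi (complex_of_real c) r) L" by (auto simp: S_def)
    then have "L \<noteq> {}" "compact L" "forward_invariant (Gsemi (complex_of_real c) r) L"
      by (auto simp: planar_minimal_set_def)
    from nonexist[OF assms(2) cr this] show False .
  qed
  have "Sup S = 1/4 - c" by (rule cSup_eq_maximum) (use inS ub in auto)
  then show ?thesis by (simp add: r_bif_def S_def)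
qed

end
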